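(* Let $p$ be a prime and $n=p^2$. Let $G=\mathrm{Circ}(a_0,\ldots,a_{n-1})$ be a Hermitian circulant with universal perfect state transfer. Then $a_j\neq 0$ for all $j\neq 0$.
   Context: $\mathrm{Circ}(a_0,\ldots,a_{n-1})$ denotes the $n\times n$ matrix $C$ with $C_{j,k}=a_{k-j}$ (indices mod $n$). A graph with Hermitian adjacency matrix $A$ has universal perfect state transfer if for every pair of vertices $v,w$ there is $t>0$ with $|\langle w|e^{-\mathtt{i} At}|v\rangle|=1$. *)

theory Defs
  imports "Jordan_Normal_Form.Matrix" "HOL-Computational_Algebra.Primes"
begin

definition circ :: "nat \<Rightarrow> (nat \<Rightarrow> complex) \<Rightarrow> complex mat" where
  "circ n a = mat n n (\<lambda>(j,k). a ((k + n - j) mod n))"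

definition hermitian_mat :: "complex mat \<Rightarrow> bool" where
  "hermitian_mat A \<longleftrightarrow> dim_row A = dim_col A \<and>
     (\<forall>j<dim_row A. \<forall>k<dim_row A. A $$ (j,k) = cnj (A $$ (k,j)))"

definition mat_exp :: "complex mat \<Rightarrow> complex mat" where
  "mat_exp M = mat (dim_row M) (dim_col M)
     (\<lambda>(i,j). (\<Sum>k. (M ^\<^sub>m k) $$ (i,j) / of_nat (fact k)))"

definition universal_PST :: "complex mat \<Rightarrow> bool" where
  "universal_PST A \<longleftrightarrow> (\<forall>v<dim_row A. \<forall>w<dim_row A. v \<noteq> w \<longrightarrow>
     (\<exists>t::real. t > 0 \<and>
        cmod (mat_exp ((- \<i> * complex_of_real t) \<cdot>\<^sub>m A) $$ (w,v)) = 1))"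

end

theory Submission
  imports Defs "Jordan_Normal_Form.Determinant"
    "HOL-Number_Theory.Cong"
begin

definition rw :: "nat \<Rightarrow> complex" where "rw n = cis (2 * pi / real n)"

lemma rw_pow: "rw n ^ l = cis (2 * pi * real l / real n)"
  unfolding rw_def DeMoivre by (simp add: field_simps mult.commute mult.left_commute)

lemma rw_pow_n: "n > 0 \<Longrightarrow> rw n ^ n = 1"
  unfolding rw_pow by simp

lemma rw_pow_ne1: assumes "0 < l" "l < n" shows "rw n ^ l \<noteq> 1"
proof
  assume "rw n ^ l = 1"
  then have "cos (2 * pi * real l / real n) = 1"
    unfolding rw_pow cis.ctr by (metis complex.sel(1) one_complex.sel(1))
  then obtain m :: int where m: "2 * pi * real l / real n = real_of_int m * 2 * pi"
    using cos_one_2pi_int by blast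
  then have "real l = real_of_int m * real n" using assms by (simp add: field_simps)
  then have "int l = m * int n" by (metis of_int_eq_iff of_int_mult of_int_of_nat_eq)
  then show False using assms
    by (metis dvd_triv_right int_dvd_int_iff nat_dvd_not_less)
qed

lemma pow_mod_n: assumes "(z::complex) ^ n = 1" shows "z ^ m = z ^ (m mod n)"
proof -
  have "z ^ m = z ^ (n * (m div n) + m mod n)" by simp
  also have "\<dots> = (z ^ n) ^ (m div n) * z ^ (m mod n)" by (simp only: power_add power_mult)
  finally show ?thesis using assms by simp
qed

lemma sum_root0: assumes "(z::complex) ^ n = 1" "z \<noteq> 1" shows "(\<Sum>k<n. z ^ k) = 0"
  using geometric_sum[OF assms(2), of n] assms by simp

lemma sum_rw: assumes "l < n" shows "(\<Sum>k<n. (rw n ^ l) ^ k) = (if l = 0 then of_nat n else 0)"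
proof (cases "l = 0")
  case True then show ?thesis by simp
next
  case False
  have "(rw n ^ l) ^ n = 1" using assms
    by (metis gr_zeroI less_nat_zero_code mult.commute power_mult power_one rw_pow_n)
  moreover have "rw n ^ l \<noteq> 1" using rw_pow_ne1 assms False by simp
  ultimately show ?thesis using sum_root0 False by simp
qed

definition fv :: "nat \<Rightarrow> complex \<Rightarrow> complex vec" where "fv n z = vec n (\<lambda>i. z ^ i)"
definition lam :: "nat \<Rightarrow> (nat \<Rightarrow> complex) \<Rightarrow> complex \<Rightarrow> complex" where
  "lam n a z = (\<Sum>e<n. a e * z ^ e)"

lemma circ_carrier: "circ n a \<in> carrier_mat n n" unfolding circ_def by simp

lemma circ_eig: assumes "z ^ n = 1"
  shows "circ n a *\<^sub>v fv n z = lam n a z \<cdot>\<^sub>v fv n z"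
proof (rule eq_vecI)
  show "dim_vec (circ n a *\<^sub>v fv n z) = dim_vec (lam n a z \<cdot>\<^sub>v fv n z)"
    by (simp add: circ_def fv_def)
  fix i assume "i < dim_vec (lam n a z \<cdot>\<^sub>v fv n z)"
  then have i: "i < n" by (simp add: fv_def)
  have "(circ n a *\<^sub>v fv n z) $ i = (\<Sum>l<n. a ((l + n - i) mod n) * z ^ l)"
    using i by (simp add: circ_def fv_def scalar_prod_def lessThan_atLeast0 mult.commute)
  also have "\<dots> = (\<Sum>e<n. a e * z ^ (e + i))"
  proof (rule sum.reindex_bij_witness[of _ "\<lambda>e. (e + i) mod n" "\<lambda>l. (l + n - i) mod n"])
    fix l assume "l \<in> {..<n}"
    then show "((l + n - i) mod n + i) mod n = l" using i
      by (metis add.commute le_add_diff_inverse2 less_imp_le_nat lessThan_iff mod_add_left_eq mod_add_self2 mod_less trans_le_add2)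
    show "(l + n - i) mod n \<in> {..<n}" using i by simp
    have "z ^ l = z ^ (((l + n - i) mod n + i) mod n)"
      using \<open>((l + n - i) mod n + i) mod n = l\<close> by simp
    also have "\<dots> = z ^ ((l + n - i) mod n + i)" using pow_mod_n[OF assms] by metis
    finally show "a ((l + n - i) mod n) * z ^ ((l + n - i) mod n + i) = a ((l + n - i) mod n) * z ^ l"
      by simp
  next
    fix e assume e: "e \<in> {..<n}"
    show "((e + i) mod n + n - i) mod n = e"
    proof -
      have "((e + i) mod n + n - i) mod n = ((e + i) mod n + (n - i)) mod n" using i by simp
      also have "\<dots> = (e + i + (n - i)) mod n" by (simp add: mod_add_left_eq)
      also have "\<dots> = (e + n) mod n" using i by simp
      also have "\<dots> = e" using e by simp
      finally show ?thesis .
    qed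
    show "(e + i) mod n \<in> {..<n}" using i by simp
  qed
  also have "\<dots> = lam n a z * z ^ i"
    unfolding lam_def sum_distrib_right by (simp add: power_add mult.assoc)
  finally show "(circ n a *\<^sub>v fv n z) $ i = (lam n a z \<cdot>\<^sub>v fv n z) $ i"
    using i by (simp add: fv_def)
qed

lemma pow_mat_eig: assumes M: "(M :: complex mat) \<in> carrier_mat n n" and f: "f \<in> carrier_vec n"
  and e: "M *\<^sub>v f = \<mu> \<cdot>\<^sub>v f"
  shows "(M ^\<^sub>m k) *\<^sub>v f = \<mu> ^ k \<cdot>\<^sub>v f"
proof (induction k)
  case 0 then show ?case using M f by simp
next
  case (Suc k)
  have "(M ^\<^sub>m Suc k) *\<^sub>v f = (M ^\<^sub>m k) *\<^sub>v (M *\<^sub>v f)"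
    using M f by (simp add: assoc_mult_mat_vec[of _ n n _ n])
  also have "\<dots> = \<mu> \<cdot>\<^sub>v ((M ^\<^sub>m k) *\<^sub>v f)" using M f e by (simp add: mult_mat_vec[OF pow_carrier_mat[OF M] f])
  also have "\<dots> = \<mu> ^ Suc k \<cdot>\<^sub>v f" using Suc by (simp add: smult_smult_assoc)
  finally show ?case .
qed

lemma pow_mat_bound: assumes M: "(M :: complex mat) \<in> carrier_mat n n"
  and K: "\<And>i j. i < n \<Longrightarrow> j < n \<Longrightarrow> cmod (M $$ (i,j)) \<le> K" and K0: "0 \<le> K"
  shows "i < n \<Longrightarrow> j < n \<Longrightarrow> cmod ((M ^\<^sub>m k) $$ (i,j)) \<le> (real n * K) ^ k"
proof (induction k arbitrary: i j)
  case 0 then show ?case using M by (simp add: one_mat_def)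
next
  case (Suc k)
  have "(M ^\<^sub>m Suc k) $$ (i,j) = (\<Sum>l\<in>{0..<n}. (M ^\<^sub>m k) $$ (i,l) * M $$ (l,j))"
    using M Suc.prems by (simp add: scalar_prod_def row_def col_def)
  also have "cmod \<dots> \<le> (\<Sum>l\<in>{0..<n}. (real n * K) ^ k * K)"
    apply (rule order.trans[OF norm_sum sum_mono])
    apply (simp only: norm_mult)
    apply (rule mult_mono)
    using Suc K K0 by auto
  also have "\<dots> = (real n * K) ^ Suc k" by simp
  finally show ?case .
qed

lemma mat_exp_summable: assumes M: "(M :: complex mat) \<in> carrier_mat n n" and i: "i < n" and j: "j < n"
  shows "summable (\<lambda>k. (M ^\<^sub>m k) $$ (i,j) / of_nat (fact k))"
proof -
  define K where "K = (\<Sum>a<n. \<Sum>b<n. cmod (M $$ (a,b)))"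
  have K: "cmod (M $$ (a,b)) \<le> K" if "a < n" "b < n" for a b
  proof -
    have "cmod (M $$ (a,b)) \<le> (\<Sum>b<n. cmod (M $$ (a,b)))"
      using that by (intro member_le_sum) auto
    also have "\<dots> \<le> K" unfolding K_def using that
      by (intro member_le_sum[where f = "\<lambda>a. \<Sum>b<n. cmod (M $$ (a,b))"]) (auto intro: sum_nonneg)
    finally show ?thesis .
  qed
  have K0: "0 \<le> K" unfolding K_def by (intro sum_nonneg) auto
  show ?thesis
  proof (rule summable_comparison_test)
    show "\<exists>N. \<forall>k\<ge>N. norm ((M ^\<^sub>m k) $$ (i,j) / of_nat (fact k)) \<le> inverse (fact k) * (real n * K) ^ k"
      using pow_mat_bound[OF M K K0 i j]
      by (auto simp: norm_divide divide_simps mult.commute)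
    show "summable (\<lambda>k. inverse (fact k) * (real n * K) ^ k)" by (rule summable_exp)
  qed
qed

lemma mat_exp_eig: assumes M: "(M :: complex mat) \<in> carrier_mat n n" and f: "f \<in> carrier_vec n"
  and e: "M *\<^sub>v f = \<mu> \<cdot>\<^sub>v f"
  shows "mat_exp M *\<^sub>v f = exp \<mu> \<cdot>\<^sub>v f"
proof (rule eq_vecI)
  show "dim_vec (mat_exp M *\<^sub>v f) = dim_vec (exp \<mu> \<cdot>\<^sub>v f)"
    using M f by (simp add: mat_exp_def)
  fix i assume "i < dim_vec (exp \<mu> \<cdot>\<^sub>v f)"
  then have i: "i < n" using f by simp
  have "(mat_exp M *\<^sub>v f) $ i = (\<Sum>j\<in>{0..<n}. (\<Sum>k. (M ^\<^sub>m k) $$ (i,j) / of_nat (fact k)) * f $ j)"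
    using M f i by (simp add: mat_exp_def scalar_prod_def row_def)
  also have "\<dots> = (\<Sum>j\<in>{0..<n}. (\<Sum>k. (M ^\<^sub>m k) $$ (i,j) / of_nat (fact k) * f $ j))"
    using mat_exp_summable[OF M i] by (intro sum.cong refl suminf_mult2) auto
  also have "\<dots> = (\<Sum>k. \<Sum>j\<in>{0..<n}. (M ^\<^sub>m k) $$ (i,j) / of_nat (fact k) * f $ j)"
    using mat_exp_summable[OF M i] by (intro suminf_sum[symmetric] summable_mult2) auto
  also have "\<dots> = (\<Sum>k. ((M ^\<^sub>m k) *\<^sub>v f) $ i / of_nat (fact k))"
    using M f i by (simp add: scalar_prod_def row_def sum_divide_distrib mult.commute)
  also have "\<dots> = (\<Sum>k. f $ i * (\<mu> ^ k /\<^sub>R fact k))"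
    using pow_mat_eig[OF M f e] f i by (simp add: scaleR_conv_of_real divide_inverse mult.commute mult.left_commute)
  also have "\<dots> = f $ i * exp \<mu>"
    using sums_unique[OF sums_mult[OF exp_converges[of \<mu>], of "f $ i"]] by simp
  finally show "(mat_exp M *\<^sub>v f) $ i = (exp \<mu> \<cdot>\<^sub>v f) $ i" using i f by simp
qed

lemma entry_formula: assumes U: "(U :: complex mat) \<in> carrier_mat n n" and w: "w < n"
  shows "(\<Sum>k<n. (U *\<^sub>v fv n (rw n ^ k)) $ w) = of_nat n * U $$ (w,0)"
proof -
  have "(\<Sum>k<n. (U *\<^sub>v fv n (rw n ^ k)) $ w) = (\<Sum>k<n. \<Sum>l\<in>{0..<n}. U $$ (w,l) * (rw n ^ l) ^ k)"
    using U w by (intro sum.cong refl) (simp add: fv_def scalar_prod_def row_def power_mult[symmetric] mult.commute)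
  also have "\<dots> = (\<Sum>l\<in>{0..<n}. U $$ (w,l) * (\<Sum>k<n. (rw n ^ l) ^ k))"
    by (subst sum.swap) (simp add: sum_distrib_left)
  also have "\<dots> = (\<Sum>l\<in>{0..<n}. if l = 0 then U $$ (w,0) * of_nat n else 0)"
    by (intro sum.cong refl) (simp add: sum_rw)
  also have "\<dots> = of_nat n * U $$ (w,0)" using w by (simp add: mult.commute)
  finally show ?thesis .
qed

lemma re_eq_cmod: assumes "Re z = cmod z" shows "z = of_real (cmod z)"
proof -
  have "cmod z ^ 2 = Re z ^ 2 + Im z ^ 2" by (rule cmod_power2)
  then have "Im z = 0" using assms by simp
  then show ?thesis using assms by (simp add: complex_eq_iff)
qed

lemma sum_unit_eq: assumes z1: "\<And>k. k < n \<Longrightarrow> cmod (z k) = 1"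
  and S: "cmod (\<Sum>k<n. z k) = real n" and k: "k < n"
  shows "z k = z 0"
proof -
  define S where "S = (\<Sum>k<n. z k)"
  have cm: "cmod (z k * cnj S) = real n" if "k < n" for k
  proof -
    have "cmod S = real n" using S unfolding S_def .
    then show ?thesis using z1[OF that] by (simp add: norm_mult)
  qed
  have le: "Re (z k * cnj S) \<le> real n" if "k < n" for k
    using complex_Re_le_cmod[of "z k * cnj S"] cm[OF that] by linarith
  have "(\<Sum>k<n. Re (z k * cnj S)) = Re (S * cnj S)"
    unfolding S_def by (simp add: sum_distrib_right)
  also have "\<dots> = real n * real n"
  proof -
    have "cmod S = real n" using S unfolding S_def .
    moreover have "Re (S * cnj S) = cmod S ^ 2" unfolding cmod_power2 by (simp add: power2_eq_square)
    ultimately show ?thesis by (simp add: power2_eq_square)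
  qed
  finally have sumeq: "(\<Sum>k<n. real n - Re (z k * cnj S)) = 0" by (simp add: sum_subtractf)
  have eqn: "Re (z k * cnj S) = real n" if "k < n" for k
    using sum_nonneg_eq_0_iff[of "{..<n}" "\<lambda>k. real n - Re (z k * cnj S)"] sumeq le that by auto
  have val: "z k * cnj S = of_nat n" if "k < n" for k
  proof -
    have "cmod (z k * cnj S) = real n" using cm[OF that] .
    then show ?thesis using re_eq_cmod[of "z k * cnj S"] eqn[OF that] by simp
  qed
  have "cnj S \<noteq> 0" using val[OF k] k by auto
  then show ?thesis using val[OF k] val[of 0] k
    by (metis gr_implies_not0 mult_cancel_right neq0_conv)
qed

lemma det_cong: assumes A: "(A :: int mat) \<in> carrier_mat m m" and B: "B \<in> carrier_mat m m"
  and c: "\<And>i j. i < m \<Longrightarrow> j < m \<Longrightarrow> [A $$ (i,j) = B $$ (i,j)] (mod q)"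
  shows "[det A = det B] (mod q)"
  unfolding det_def'[OF A] det_def'[OF B]
proof (rule cong_sum, rule cong_mult[OF cong_refl], rule cong_prod)
  fix pi i assume "pi \<in> {p. p permutes {0..<m}}" "i \<in> {0..<m}"
  then show "[A $$ (i, pi i) = B $$ (i, pi i)] (mod q)"
    using c permutes_in_image by fastforce
qed

lemma det_ne0: assumes B: "(B :: int mat) \<in> carrier_mat m m" and q: "prime (q::int)"
  and c: "\<And>i j. i < m \<Longrightarrow> j < m \<Longrightarrow> [B $$ (i,j) = (if i = j then -1 else 0)] (mod q)"
  shows "det B \<noteq> 0"
proof
  assume d: "det B = 0"
  have "[det B = det ((-1) \<cdot>\<^sub>m (1\<^sub>m m :: int mat))] (mod q)"
  proof (rule det_cong[OF B])
    show "(-1) \<cdot>\<^sub>m (1\<^sub>m m :: int mat) \<in> carrier_mat m m" by simp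
    fix i j assume ij: "i < m" "j < m"
    then show "[B $$ (i,j) = ((-1) \<cdot>\<^sub>m (1\<^sub>m m :: int mat)) $$ (i,j)] (mod q)"
      using c[OF ij] by (cases "i = j") auto
  qed
  then have "[0 = (-1) ^ m] (mod q)" using d by simp
  then have "q dvd (-1) ^ m" by (simp add: cong_def mod_eq_0_iff_dvd[symmetric])
  moreover have "(-1::int) ^ m = 1 \<or> (-1::int) ^ m = -1" by (cases "even m") auto
  ultimately have "q dvd 1" by auto
  then show False using q by (simp add: prime_int_iff)
qed

lemma binom_dvd: assumes p: "prime (p::nat)" and i: "0 < i" "i < p ^ 2"
  shows "p dvd (p ^ 2 choose i)"
proof (rule ccontr)
  assume nd: "\<not> p dvd (p ^ 2 choose i)"
  have "i * (p ^ 2 choose i) = p ^ 2 * ((p ^ 2 - 1) choose (i - 1))"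
    using times_binomial_minus1_eq[OF i(1)] by simp
  then have "p ^ 2 dvd i * (p ^ 2 choose i)" by simp
  moreover have "coprime (p ^ 2) (p ^ 2 choose i)"
    using nd p by (simp add: prime_imp_coprime)
  ultimately have "p ^ 2 dvd i" by (metis coprime_dvd_mult_left_iff)
  then show False using i by (simp add: nat_dvd_not_less)
qed

definition Zr :: "nat \<Rightarrow> complex \<Rightarrow> complex \<Rightarrow> bool" where
  "Zr n z x \<longleftrightarrow> (\<exists>c::nat \<Rightarrow> int. x = (\<Sum>e<n. of_int (c e) * z ^ e))"

lemma Zr_pow: assumes "z ^ n = 1" "n > 0" shows "Zr n z (of_int c * z ^ k)"
proof -
  have "(\<Sum>e<n. of_int (if e = k mod n then c else 0) * z ^ e) = (\<Sum>e<n. if e = k mod n then of_int c * z ^ e else 0)"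
    by (intro sum.cong) auto
  also have "\<dots> = of_int c * z ^ (k mod n)"
    using assms(2) by (subst sum.delta) auto
  also have "\<dots> = of_int c * z ^ k" using pow_mod_n[OF assms(1)] by metis
  finally have calc: "(\<Sum>e<n. of_int (if e = k mod n then c else 0) * z ^ e) = of_int c * z ^ k" .
  show ?thesis unfolding Zr_def
    by (rule exI[where x="\<lambda>e. if e = k mod n then c else 0"]) (use calc in simp)
qed

lemma Zr_add: assumes "Zr n z x" "Zr n z y" shows "Zr n z (x + y)"
proof -
  obtain c d where "x = (\<Sum>e<n. of_int (c e) * z ^ e)" "y = (\<Sum>e<n. of_int (d e) * z ^ e)"
    using assms unfolding Zr_def by blast
  then have "x + y = (\<Sum>e<n. of_int (c e + d e) * z ^ e)"
    by (simp add: sum.distrib distrib_right)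
  then show ?thesis unfolding Zr_def by (intro exI[where x="\<lambda>e. c e + d e"])
qed

lemma Zr_0: "Zr n z 0" unfolding Zr_def by (rule exI[of _ "\<lambda>_. 0"]) simp

lemma Zr_sum: assumes "\<And>i. i \<in> A \<Longrightarrow> Zr n z (f i)" shows "Zr n z (\<Sum>i\<in>A. f i)"
  using assms by (induction A rule: infinite_finite_induct) (auto simp: Zr_0 intro: Zr_add)

lemma Zr_mult: assumes "z ^ n = 1" "n > 0" "Zr n z x" "Zr n z y" shows "Zr n z (x * y)"
proof -
  obtain c d where xy: "x = (\<Sum>e<n. of_int (c e) * z ^ e)" "y = (\<Sum>e<n. of_int (d e) * z ^ e)"
    using assms unfolding Zr_def by blast
  have "x * y = (\<Sum>e<n. \<Sum>e'<n. of_int (c e * d e') * z ^ (e + e'))"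
    unfolding xy sum_product by (intro sum.cong refl) (simp add: power_add mult_ac)
  moreover have "Zr n z (\<Sum>e<n. \<Sum>e'<n. of_int (c e * d e') * z ^ (e + e'))"
    by (intro Zr_sum Zr_pow[OF assms(1,2)])
  ultimately show ?thesis by simp
qed

lemma Zr_int: assumes "z ^ n = 1" "n > 0" shows "Zr n z (of_int c)"
  using Zr_pow[OF assms, of c 0] by simp

lemma Zr_power: assumes "z ^ n = 1" "n > 0" "Zr n z x" shows "Zr n z (x ^ k)"
  by (induction k) (use Zr_int[OF assms(1,2), of 1] Zr_mult[OF assms(1,2)] assms(3) in auto)

lemma no_inv: assumes z: "z ^ n = 1" and n: "n > 0" and p: "prime (p::int)"
  and x: "Zr n z x" and e: "of_int p * x = 1"
  shows False
proof -
  obtain c where xc: "x = (\<Sum>e<n. of_int (c e) * z ^ e)" using x unfolding Zr_def by blast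
  define b where "b e = p * c e - (if e = 0 then 1 else 0)" for e
  define a where "a e = (of_int (b e) :: complex)" for e
  have d1: "(\<Sum>e<n. (if e = 0 then 1 else 0) * z ^ e) = 1"
  proof -
    have "(\<Sum>e<n. (if e = 0 then 1 else 0) * z ^ e) = (\<Sum>e<n. if e = 0 then z ^ e else 0)"
      by (intro sum.cong) auto
    also have "\<dots> = 1" using n by (subst sum.delta) auto
    finally show ?thesis .
  qed
  have "lam n a z = (\<Sum>e<n. of_int p * (of_int (c e) * z ^ e)) - (\<Sum>e<n. (if e = 0 then 1 else 0) * z ^ e)"
    unfolding lam_def a_def b_def sum_subtractf[symmetric]
    by (intro sum.cong refl) (simp add: algebra_simps)
  also have "\<dots> = of_int p * x - 1" unfolding d1 xc sum_distrib_left ..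
  finally have "lam n a z = of_int p * x - 1" .
  then have l0: "lam n a z = 0" using e by simp
  have f: "fv n z \<in> carrier_vec n" "fv n z \<noteq> 0\<^sub>v n"
    using n by (auto simp: fv_def) (metis index_vec index_zero_vec(1) one_neq_zero power_0)
  have "circ n a *\<^sub>v fv n z = 0\<^sub>v n" using circ_eig[OF z, of a] l0 f
    by (simp, intro eq_vecI) (auto simp: fv_def)
  then have d0: "det (circ n a) = 0"
    using det_0_iff_vec_prod_zero[OF circ_carrier] f by blast
  define B where "B = mat n n (\<lambda>(j,k). b ((k + n - j) mod n))"
  have cB: "circ n a = map_mat of_int B" unfolding B_def circ_def a_def by auto
  have "det B = 0" using d0 unfolding cB of_int_hom.hom_det by simp
  moreover have "det B \<noteq> 0"
  proof (rule det_ne0[OF _ p])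
    show "B \<in> carrier_mat n n" unfolding B_def by simp
    fix i j assume ij: "i < n" "j < n"
    have "(j + n - i) mod n = 0 \<longleftrightarrow> i = j"
    proof
      assume "(j + n - i) mod n = 0"
      then show "i = j"
      proof (cases "i \<le> j")
        case True
        then have "(j + n - i) mod n = (j - i + n) mod n" by (simp add: add.commute)
        also have "\<dots> = j - i" using ij by simp
        finally show ?thesis using \<open>(j + n - i) mod n = 0\<close> True by simp
      next
        case False
        then have "(j + n - i) mod n = j + n - i" using ij by (intro mod_less) simp
        then show ?thesis using \<open>(j + n - i) mod n = 0\<close> False ij by simp
      qed
    qed simp
    then show "[B $$ (i,j) = (if i = j then -1 else 0)] (mod p)"
    proof -
      have h: "(p * y - 1) mod p = (-1) mod p" for y
      proof -
        have "p * y - 1 = -1 + y * p" by simp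
        then show ?thesis by (metis mod_mult_self1)
      qed
      show ?thesis using ij \<open>(j + n - i) mod n = 0 \<longleftrightarrow> i = j\<close>
        unfolding B_def b_def by (auto simp: cong_def h)
    qed
  qed
  ultimately show False by simp
qed

lemma binom_part: assumes p: "prime p" and nn: "n = p ^ 2" and z: "z ^ n = 1"
  shows "\<exists>G. Zr n z G \<and> (z - 1) ^ n = of_nat p * G"
proof -
  have n0: "n > 0" using p nn by (simp add: prime_gt_0_nat)
  define T where "T i = of_nat (n choose i) * z ^ i * (-1) ^ (n - i)" for i
  have "(z - 1) ^ n = (\<Sum>i\<le>n. T i)"
    unfolding T_def using binomial_ring[of z "-1" n] by simp
  also have "{..n} = insert 0 (insert n {1..<n})" using n0 by auto
  also have "(\<Sum>i\<in>insert 0 (insert n {1..<n}). T i) = T 0 + T n + (\<Sum>i\<in>{1..<n}. T i)"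
    using n0 by (simp add: add.assoc)
  finally have eq: "(z - 1) ^ n = T 0 + T n + (\<Sum>i\<in>{1..<n}. T i)" .
  have mid: "\<exists>q. T i = of_nat p * (of_int (int q * (-1) ^ (n - i)) * z ^ i)" if "i \<in> {1..<n}" for i
  proof -
    have "p dvd (n choose i)" using binom_dvd[OF p, of i] that nn by auto
    then obtain q where "n choose i = p * q" by (elim dvdE)
    then show ?thesis unfolding T_def by (intro exI[of _ q]) simp
  qed
  obtain Q where Q: "\<And>i. i \<in> {1..<n} \<Longrightarrow> T i = of_nat p * (of_int (int (Q i) * (-1) ^ (n - i)) * z ^ i)"
    using mid by metis
  have midsum: "(\<Sum>i\<in>{1..<n}. T i) = of_nat p * (\<Sum>i\<in>{1..<n}. of_int (int (Q i) * (-1) ^ (n - i)) * z ^ i)"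
    unfolding sum_distrib_left using Q by (intro sum.cong) auto
  have ends: "\<exists>e::int. T 0 + T n = of_nat p * of_int e"
  proof (cases "p = 2")
    case True
    then have "n = 4" using nn by simp
    then show ?thesis unfolding T_def using z True by (intro exI[of _ 1]) simp
  next
    case False
    then have "odd p" using p prime_odd_nat prime_ge_2_nat by (metis le_neq_implies_less)
    then have "odd n" using nn by simp
    then show ?thesis unfolding T_def using z by (intro exI[of _ 0]) simp
  qed
  then obtain e :: int where e: "T 0 + T n = of_nat p * of_int e" by blast
  define G where "G = of_int e + (\<Sum>i\<in>{1..<n}. of_int (int (Q i) * (-1) ^ (n - i)) * z ^ i)"
  have "Zr n z G" unfolding G_def
    by (intro Zr_add Zr_int[OF z n0] Zr_sum Zr_pow[OF z n0])
  moreover have "(z - 1) ^ n = of_nat p * G"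
    unfolding eq midsum e G_def by (simp add: distrib_left)
  ultimately show ?thesis by blast
qed

lemma key_alg: assumes p: "prime p" and nn: "n = p ^ 2" and z: "z ^ n = 1"
  and M: "Zr n z Mz" and e: "1 + (z - 1) * Mz = 0"
  shows False
proof -
  have n0: "n > 0" using p nn by (simp add: prime_gt_0_nat)
  obtain G where G: "Zr n z G" "(z - 1) ^ n = of_nat p * G" using binom_part[OF p nn z] by blast
  have "(z - 1) * Mz = -1" using e by (simp add: eq_neg_iff_add_eq_0 add.commute)
  then have "((z - 1) * Mz) ^ n = (-1) ^ n" by simp
  then have "of_nat p * G * Mz ^ n = (-1) ^ n" using G(2) by (simp add: power_mult_distrib)
  then have "(-1) ^ n * (of_nat p * G * Mz ^ n) = (-1) ^ n * (-1) ^ n" by simp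
  then have "of_int (int p) * (of_int ((-1) ^ n) * G * Mz ^ n) = 1"
    by (simp add: power_mult_distrib[symmetric] mult_ac)
  moreover have "Zr n z (of_int ((-1) ^ n) * G * Mz ^ n)"
    by (intro Zr_mult[OF z n0] Zr_int[OF z n0] Zr_power[OF z n0] G M)
  moreover have "prime (int p)" using p by simp
  ultimately show False using no_inv[OF z n0] by blast
qed

lemma smult_mat_vec: assumes A: "(A :: complex mat) \<in> carrier_mat n n" and v: "v \<in> carrier_vec n"
  shows "(c \<cdot>\<^sub>m A) *\<^sub>v v = c \<cdot>\<^sub>v (A *\<^sub>v v)"
  using A v by (intro eq_vecI) (auto simp: scalar_prod_def row_def sum_distrib_left mult.assoc)

lemma modzero: fixes i j n :: nat assumes ij: "i < n" "j < n" shows "(j + n - i) mod n = 0 \<longleftrightarrow> i = j"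
proof
  assume h: "(j + n - i) mod n = 0"
  show "i = j"
  proof (cases "i \<le> j")
    case True
    then have "j + n - i = j - i + n" by arith
    then have "(j + n - i) mod n = (j - i + n) mod n" by simp
    also have "\<dots> = j - i" using ij by simp
    finally show ?thesis using h True by simp
  next
    case False
    then have "(j + n - i) mod n = j + n - i" using ij by (intro mod_less) simp
    then show ?thesis using h False ij by simp
  qed
qed simp

lemma cnj_root_pow: assumes z: "(z::complex) ^ n = 1" and nz: "cnj z * z = 1" and e: "e < n"
  shows "cnj (z ^ e) = z ^ ((n - e) mod n)"
proof -
  have "z ^ ((n - e) mod n) = z ^ (n - e)" using pow_mod_n[OF z] by metis
  then have a: "z ^ ((n - e) mod n) * z ^ e = 1" using z e by (simp add: power_add[symmetric])
  have b: "cnj (z ^ e) * z ^ e = 1" using nz by (simp add: power_mult_distrib[symmetric])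
  have "z \<noteq> 0" using nz by auto
  then have "z ^ e \<noteq> 0" by simp
  then show ?thesis using a b by (metis mult_cancel_right)
qed

lemma lam_real: assumes h: "\<And>e. e < n \<Longrightarrow> a ((n - e) mod n) = cnj (a e)"
  and z: "(z::complex) ^ n = 1" and nz: "cnj z * z = 1"
  shows "cnj (lam n a z) = lam n a z"
proof -
  have "cnj (lam n a z) = (\<Sum>e<n. a ((n - e) mod n) * z ^ ((n - e) mod n))"
    unfolding lam_def cnj_sum
    by (intro sum.cong refl) (simp only: complex_cnj_mult h cnj_root_pow[OF z nz] lessThan_iff)
  also have "\<dots> = lam n a z" unfolding lam_def
  proof (rule sum.reindex_bij_witness[of _ "\<lambda>e. (n - e) mod n" "\<lambda>e. (n - e) mod n"])
    have inv: "(n - (n - e) mod n) mod n = e" if e: "e \<in> {..<n}" for e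
      using e by (cases "e = 0") (auto simp: mod_if)
    fix e assume e: "e \<in> {..<n}"
    show "(n - (n - e) mod n) mod n = e" using inv[OF e] .
    show "(n - e) mod n \<in> {..<n}" using e by auto
  next
    fix e assume e: "e \<in> {..<n}"
    show "(n - (n - e) mod n) mod n = e"
      using e by (cases "e = 0") (auto simp: mod_if)
    show "(n - e) mod n \<in> {..<n}" using e by auto
  qed auto
  finally show ?thesis .
qed

lemma sum_k_pow: "((z::complex) - 1) * (\<Sum>k<m. of_nat k * z ^ k) = (of_nat m - 1) * z ^ m + 1 - (\<Sum>k<m. z ^ k)"
  by (induction m) (auto simp: algebra_simps)

theorem lemma7:
  fixes p n :: nat and a :: "nat \<Rightarrow> complex"
  assumes "prime p" and "n = p ^ 2"
    and "hermitian_mat (circ n a)"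
    and "universal_PST (circ n a)"
  shows "\<forall>j. 0 < j \<and> j < n \<longrightarrow> a j \<noteq> 0"
proof (intro allI impI)
  fix j assume j: "0 < j \<and> j < n"
  note p = assms(1) and nn = assms(2)
  show "a j \<noteq> 0"
  proof
    assume aj: "a j = 0"
    have p2: "p \<ge> 2" using p by (simp add: prime_ge_2_nat)
    have "4 \<le> p ^ 2" using power_mono[OF p2, of 2] by simp
    then have n1: "1 < n" using nn by simp
    then have n0: "n > 0" by simp
    define \<omega> where "\<omega> = rw n"
    have wn: "\<omega> ^ n = 1" unfolding \<omega>_def using rw_pow_n[OF n0] .
    have rootk: "(\<omega> ^ k) ^ n = 1" for k
    proof -
      have "(\<omega> ^ k) ^ n = (\<omega> ^ n) ^ k" by (simp only: power_mult[symmetric] mult.commute[of k n])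
      then show ?thesis using wn by simp
    qed
    have cnjk: "cnj (\<omega> ^ k) * \<omega> ^ k = 1" for k
      unfolding \<omega>_def rw_pow cis_cnj cis_mult by simp
    have herm: "a ((n - e) mod n) = cnj (a e)" if e: "e < n" for e
    proof -
      have dim: "dim_row (circ n a) = n" by (simp add: circ_def)
      have "circ n a $$ (e,0) = cnj (circ n a $$ (0,e))"
        using assms(3)[unfolded hermitian_mat_def dim] e n0 by blast
      moreover have "circ n a $$ (e,0) = a ((n - e) mod n)" using e n0 by (simp add: circ_def)
      moreover have "circ n a $$ (0,e) = a e" using e n0 by (simp add: circ_def)
      ultimately show ?thesis by simp
    qed
    define lamk where "lamk k = lam n a (\<omega> ^ k)" for k
    define r where "r k = Re (lamk k)" for k
    have lr: "lamk k = of_real (r k)" for k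
    proof -
      have "cnj (lamk k) = lamk k" unfolding lamk_def by (rule lam_real[where z="\<omega> ^ k" and n=n and a=a, OF herm rootk cnjk])
      then have "Im (cnj (lamk k)) = Im (lamk k)" by (rule arg_cong)
      then have "Im (lamk k) = 0" by simp
      then show ?thesis unfolding r_def by (simp add: complex_eq_iff)
    qed
    obtain t :: real where t: "t > 0"
      and pst: "cmod (mat_exp ((- \<i> * complex_of_real t) \<cdot>\<^sub>m circ n a) $$ (1, 0)) = 1"
    proof -
      have dim: "dim_row (circ n a) = n" by (simp add: circ_def)
      have "\<exists>t::real. t > 0 \<and> cmod (mat_exp ((- \<i> * complex_of_real t) \<cdot>\<^sub>m circ n a) $$ (1, 0)) = 1"
        using assms(4)[unfolded universal_PST_def dim, rule_format, of 0 1] n1 by simp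
      then show ?thesis using that by blast
    qed
    define M where "M = (- \<i> * complex_of_real t) \<cdot>\<^sub>m circ n a"
    define U where "U = mat_exp M"
    have Mc: "M \<in> carrier_mat n n" unfolding M_def using circ_carrier by simp
    have Uc: "U \<in> carrier_mat n n" unfolding U_def mat_exp_def using Mc by simp
    have fk: "fv n (\<omega> ^ k) \<in> carrier_vec n" for k by (simp add: fv_def)
    have eigM: "M *\<^sub>v fv n (\<omega> ^ k) = ((- \<i> * complex_of_real t) * lamk k) \<cdot>\<^sub>v fv n (\<omega> ^ k)" for k
      unfolding M_def lamk_def
      by (simp add: smult_mat_vec[OF circ_carrier fk] circ_eig[OF rootk] smult_smult_assoc)
    have eigU: "U *\<^sub>v fv n (\<omega> ^ k) = exp ((- \<i> * complex_of_real t) * lamk k) \<cdot>\<^sub>v fv n (\<omega> ^ k)" for k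
      unfolding U_def by (rule mat_exp_eig[OF Mc fk eigM])
    define zz where "zz k = exp ((- \<i> * complex_of_real t) * lamk k) * \<omega> ^ k" for k
    have zzc: "zz k = cis (2 * pi * real k / real n - t * r k)" for k
    proof -
      have "exp ((- \<i> * complex_of_real t) * lamk k) = cis (- (t * r k))"
        unfolding lr cis_conv_exp by (simp add: mult_ac)
      then show ?thesis unfolding zz_def \<omega>_def rw_pow by (simp add: cis_mult)
    qed
    have zz1: "cmod (zz k) = 1" for k unfolding zzc by simp
    have "(\<Sum>k<n. zz k) = (\<Sum>k<n. (U *\<^sub>v fv n (\<omega> ^ k)) $ 1)"
      using n1 by (intro sum.cong refl, subst eigU) (simp add: zz_def fv_def)
    also have "\<dots> = of_nat n * U $$ (1, 0)" unfolding \<omega>_def by (rule entry_formula[OF Uc n1])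
    finally have "cmod (\<Sum>k<n. zz k) = real n" using pst unfolding U_def M_def by (simp add: norm_mult)
    then have zzeq: "zz k = zz 0" if "k < n" for k by (intro sum_unit_eq[where z=zz and n=n] zz1 that)
    have ex: "\<exists>N::int. 2 * pi * real k / real n - t * r k + t * r 0 = real_of_int N * 2 * pi" if k: "k < n" for k
    proof -
      have "cis (2 * pi * real k / real n - t * r k) = cis (- (t * r 0))"
        using zzeq[OF k] unfolding zzc by simp
      then have "cis (2 * pi * real k / real n - t * r k) * cis (t * r 0) = 1"
        by (simp add: cis_mult)
      then have "cis (2 * pi * real k / real n - t * r k + t * r 0) = 1" by (simp add: cis_mult)
      then have "cos (2 * pi * real k / real n - t * r k + t * r 0) = 1"
        by (metis cis.sel(1) one_complex.sel(1))
      then show ?thesis using cos_one_2pi_int by blast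
    qed
    have "\<forall>k\<in>{..<n}. \<exists>N::int. 2 * pi * real k / real n - t * r k + t * r 0 = real_of_int N * 2 * pi"
      using ex by simp
    then obtain N :: "nat \<Rightarrow> int" where
      N0: "\<forall>k\<in>{..<n}. 2 * pi * real k / real n - t * r k + t * r 0 = real_of_int (N k) * 2 * pi"
      by (erule bchoice[THEN exE])
    have N: "2 * pi * real k / real n - t * r k + t * r 0 = real_of_int (N k) * 2 * pi" if "k < n" for k
      using N0 that by simp
    define c where "c = 2 * pi / (real n * t)"
    have c0: "c \<noteq> 0" unfolding c_def using t n0 by simp
    have rk: "r k = r 0 + c * (real k - real n * real_of_int (N k))" if k: "k < n" for k
    proof -
      have "t * r k = t * r 0 + 2 * pi * real k / real n - real_of_int (N k) * 2 * pi" using N[OF k] by linarith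
      then show ?thesis unfolding c_def using t n0 by (simp add: field_simps)
    qed
    define \<zeta> where "\<zeta> = \<omega> ^ (n - j)"
    have zn: "\<zeta> ^ n = 1" unfolding \<zeta>_def by (rule rootk)
    have zne: "\<zeta> \<noteq> 1" unfolding \<zeta>_def \<omega>_def using rw_pow_ne1[of "n - j" n] j by simp
    have zs0: "(\<Sum>k<n. \<zeta> ^ k) = 0" by (rule sum_root0[OF zn zne])
    have pw: "(\<omega> ^ k) ^ e * \<zeta> ^ k = (\<omega> ^ ((e + n - j) mod n)) ^ k" for k e
    proof -
      have "(\<omega> ^ k) ^ e * \<zeta> ^ k = \<omega> ^ (k * e + (n - j) * k)"
        unfolding \<zeta>_def by (simp only: power_mult[symmetric] power_add[symmetric])
      also have "k * e + (n - j) * k = (e + n - j) * k" using j by (simp add: algebra_simps)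
      also have "\<omega> ^ ((e + n - j) * k) = (\<omega> ^ (e + n - j)) ^ k" by (simp only: power_mult)
      also have "\<omega> ^ (e + n - j) = \<omega> ^ ((e + n - j) mod n)" by (rule pow_mod_n[OF wn])
      finally show ?thesis .
    qed
    have A: "(\<Sum>k<n. lamk k * \<zeta> ^ k) = 0"
    proof -
      have "(\<Sum>k<n. lamk k * \<zeta> ^ k) = (\<Sum>k<n. \<Sum>e<n. a e * (\<omega> ^ ((e + n - j) mod n)) ^ k)"
        unfolding lamk_def lam_def sum_distrib_right
        by (intro sum.cong refl) (simp only: mult.assoc pw)
      also have "\<dots> = (\<Sum>e<n. a e * (\<Sum>k<n. (\<omega> ^ ((e + n - j) mod n)) ^ k))"
        by (subst sum.swap) (simp only: sum_distrib_left)
      also have "\<dots> = (\<Sum>e<n. if e = j then a e * of_nat n else 0)"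
      proof (intro sum.cong refl)
        fix e assume e: "e \<in> {..<n}"
        have "(e + n - j) mod n < n" using n0 by simp
        then have "(\<Sum>k<n. (\<omega> ^ ((e + n - j) mod n)) ^ k) = (if (e + n - j) mod n = 0 then of_nat n else 0)"
          unfolding \<omega>_def by (rule sum_rw)
        moreover have "(e + n - j) mod n = 0 \<longleftrightarrow> j = e" using modzero[of j n e] j e by simp
        ultimately show "a e * (\<Sum>k<n. (\<omega> ^ ((e + n - j) mod n)) ^ k) = (if e = j then a e * of_nat n else 0)"
          by auto
      qed
      also have "\<dots> = 0" using aj j by simp
      finally show ?thesis .
    qed
    define S where "S = (\<Sum>k<n. (of_nat k - of_nat n * of_int (N k)) * \<zeta> ^ k)"
    have "(\<Sum>k<n. lamk k * \<zeta> ^ k) = (\<Sum>k<n. of_real (r 0) * \<zeta> ^ k + of_real c * ((of_nat k - of_nat n * of_int (N k)) * \<zeta> ^ k))"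
    proof (intro sum.cong refl)
      fix k assume "k \<in> {..<n}"
      then have kn: "k < n" by simp
      have rkk: "r k = r 0 + c * (real k - real n * real_of_int (N k))" by (rule rk[OF kn])
      have "lamk k = of_real (r 0 + c * (real k - real n * real_of_int (N k)))"
        unfolding lr rkk ..
      then have lk: "lamk k = of_real (r 0) + of_real c * (of_nat k - of_nat n * of_int (N k))"
        by simp
      show "lamk k * \<zeta> ^ k = of_real (r 0) * \<zeta> ^ k + of_real c * ((of_nat k - of_nat n * of_int (N k)) * \<zeta> ^ k)"
        unfolding lk by (simp add: algebra_simps)
    qed
    also have "\<dots> = of_real (r 0) * (\<Sum>k<n. \<zeta> ^ k) + of_real c * S"
      unfolding S_def by (simp only: sum.distrib sum_distrib_left)
    finally have "of_real c * S = 0" using A zs0 by simp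
    then have S0: "S = 0" using c0 by simp
    define K where "K = (\<Sum>k<n. of_nat k * \<zeta> ^ k)"
    define Mz where "Mz = (\<Sum>k<n. of_int (- N k) * \<zeta> ^ k)"
    have "S = (\<Sum>k<n. of_nat k * \<zeta> ^ k + of_nat n * (of_int (- N k) * \<zeta> ^ k))"
      unfolding S_def by (intro sum.cong refl) (simp add: algebra_simps)
    also have "\<dots> = K + of_nat n * Mz" unfolding K_def Mz_def by (simp only: sum.distrib sum_distrib_left)
    finally have SK: "S = K + of_nat n * Mz" .
    have "(\<zeta> - 1) * K = of_nat n"
      unfolding K_def sum_k_pow zn zs0 by simp
    then have "of_nat n * (1 + (\<zeta> - 1) * Mz) = (\<zeta> - 1) * S"
      unfolding SK by (simp add: algebra_simps)
    then have "of_nat n * (1 + (\<zeta> - 1) * Mz) = 0" using S0 by simp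
    then have "1 + (\<zeta> - 1) * Mz = 0" using n0 by simp
    moreover have "Zr n \<zeta> Mz" unfolding Zr_def Mz_def by (rule exI[where x="\<lambda>k. - N k"]) (rule refl)
    ultimately show False using key_alg[OF p nn zn] by blast
  qed
qed

end
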